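(* Let $(M,P,g)$ be a 4-dimensional Riemannian almost product manifold with $\operatorname{tr}P=0$. A curvature-like tensor $L$ on $M$ is a Riemannian $P$-tensor if and only if $$L=\frac{1}{8}\left\{\tau(L)(\pi_1+\pi_2)+\tau^*(L)\pi_3\right\}.$$
   Context: A Riemannian almost product manifold $(M,P,g)$: $M$ smooth, $P$ a $(1,1)$-tensor field with $P^2=\mathrm{id}$, $g$ Riemannian with $g(Px,Py)=g(x,y)$. A curvature-like tensor is a $(0,4)$-tensor $L$ with $L(x,y,z,w)=-L(y,x,z,w)=-L(x,y,w,z)$ and $L(x,y,z,w)+L(y,z,x,w)+L(z,x,y,w)=0$; it is a Riemannian $P$-tensor if moreover $L(x,y,Pz,Pw)=L(x,y,z,w)$. Put $\widetilde g(x,y)=g(x,Py)$. For a $(0,2)$-tensor $S$ let $\psi_1(S)(x,y,z,w)=g(y,z)S(x,w)-g(x,z)S(y,w)+S(y,z)g(x,w)-S(x,z)g(y,w)$ and $\psi_2(S)(x,y,z,w)=\psi_1(S)(x,y,Pz,Pw)$; set $\pi_1=\tfrac12\psi_1(g)$, $\pi_2=\tfrac12\psi_2(g)$, $\pi_3=\psi_1(\widetilde g)$. For a basis $\{e_i\}$ with $g^{ij}$ the inverse of $(g(e_i,e_j))$: $\rho(L)(y,z)=\sum g^{ij}L(e_i,y,z,e_j)$, $\tau(L)=\sum g^{ij}\rho(L)(e_i,e_j)$, $\rho^*(L)(y,z)=\sum g^{ij}L(e_i,y,z,Pe_j)$, $\tau^*(L)=\sum g^{ij}\rho^*(L)(e_i,e_j)$.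 *)

theory Defs
  imports "HOL-Analysis.Analysis"
begin

text \<open>Pointwise (tangent-space) setting: the tangent space at a point is a real
inner product space 'a :: euclidean_space, the metric g is the inner product,
and Basis is a g-orthonormal basis, so that g^{ij} is the identity matrix.\<close>

type_synonym 'a tensor4 = "'a \<Rightarrow> 'a \<Rightarrow> 'a \<Rightarrow> 'a \<Rightarrow> real"
type_synonym 'a tensor2 = "'a \<Rightarrow> 'a \<Rightarrow> real"

definition almost_product_structure :: "('a::euclidean_space \<Rightarrow> 'a) \<Rightarrow> bool" where
  "almost_product_structure P \<longleftrightarrow> linear P \<and> (\<forall>x. P (P x) = x) \<and>
     (\<forall>x y. inner (P x) (P y) = inner x y)"

definition trace_op :: "('a::euclidean_space \<Rightarrow> 'a) \<Rightarrow> real" where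
  "trace_op P = (\<Sum>b\<in>Basis. inner (P b) b)"

definition multilinear4 :: "('a::real_vector) tensor4 \<Rightarrow> bool" where
  "multilinear4 L \<longleftrightarrow>
     (\<forall>y z w. linear (\<lambda>x. L x y z w)) \<and> (\<forall>x z w. linear (\<lambda>y. L x y z w)) \<and>
     (\<forall>x y w. linear (\<lambda>z. L x y z w)) \<and> (\<forall>x y z. linear (\<lambda>w. L x y z w))"

definition curvature_like :: "('a::real_vector) tensor4 \<Rightarrow> bool" where
  "curvature_like L \<longleftrightarrow> multilinear4 L \<and>
     (\<forall>x y z w. L x y z w = - L y x z w) \<and>
     (\<forall>x y z w. L x y z w = - L x y w z) \<and>
     (\<forall>x y z w. L x y z w + L y z x w + L z x y w = 0)"

definition riemannian_P_tensor :: "('a \<Rightarrow> 'a) \<Rightarrow> ('a::real_vector) tensor4 \<Rightarrow> bool" where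
  "riemannian_P_tensor P L \<longleftrightarrow> curvature_like L \<and>
     (\<forall>x y z w. L x y (P z) (P w) = L x y z w)"

definition psi1 :: "('a::real_inner) tensor2 \<Rightarrow> 'a tensor4" where
  "psi1 S x y z w = inner y z * S x w - inner x z * S y w + S y z * inner x w - S x z * inner y w"

definition psi2 :: "('a \<Rightarrow> 'a) \<Rightarrow> ('a::real_inner) tensor2 \<Rightarrow> 'a tensor4" where
  "psi2 P S x y z w = psi1 S x y (P z) (P w)"

definition gtilde :: "('a \<Rightarrow> 'a) \<Rightarrow> ('a::real_inner) tensor2" where
  "gtilde P x y = inner x (P y)"

definition pi1 :: "('a::real_inner) tensor4" where
  "pi1 x y z w = (1/2) * psi1 inner x y z w"

definition pi2 :: "('a \<Rightarrow> 'a) \<Rightarrow> ('a::real_inner) tensor4" where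
  "pi2 P x y z w = (1/2) * psi2 P inner x y z w"

definition pi3 :: "('a \<Rightarrow> 'a) \<Rightarrow> ('a::real_inner) tensor4" where
  "pi3 P x y z w = psi1 (gtilde P) x y z w"

definition ricci :: "('a::euclidean_space) tensor4 \<Rightarrow> 'a tensor2" where
  "ricci L y z = (\<Sum>e\<in>Basis. L e y z e)"

definition scal :: "('a::euclidean_space) tensor4 \<Rightarrow> real" where
  "scal L = (\<Sum>e\<in>Basis. ricci L e e)"

definition ricci_star :: "('a \<Rightarrow> 'a) \<Rightarrow> ('a::euclidean_space) tensor4 \<Rightarrow> 'a tensor2" where
  "ricci_star P L y z = (\<Sum>e\<in>Basis. L e y z (P e))"

definition scal_star :: "('a \<Rightarrow> 'a) \<Rightarrow> ('a::euclidean_space) tensor4 \<Rightarrow> real" where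
  "scal_star P L = (\<Sum>e\<in>Basis. ricci_star P L e e)"

end

theory Submission imports Defs begin

context
  fixes L :: "'a::euclidean_space tensor4"
  assumes cl: "curvature_like L"
begin

lemma ml: "multilinear4 L" using cl unfolding curvature_like_def by blast
lemma lin1: "linear (\<lambda>x. L x y z w)" using ml unfolding multilinear4_def by blast
lemma lin2: "linear (\<lambda>y. L x y z w)" using ml unfolding multilinear4_def by blast
lemma lin3: "linear (\<lambda>z. L x y z w)" using ml unfolding multilinear4_def by blast
lemma lin4: "linear (\<lambda>w. L x y z w)" using ml unfolding multilinear4_def by blast

lemma Ladd:
  "L (a+b) y z w = L a y z w + L b y z w"
  "L x (a+b) z w = L x a z w + L x b z w"
  "L x y (a+b) w = L x y a w + L x y b w"
  "L x y z (a+b) = L x y z a + L x y z b"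
  using linear_add[OF lin1] linear_add[OF lin2] linear_add[OF lin3] linear_add[OF lin4] by auto

lemma Lscale:
  "L (r *\<^sub>R a) y z w = r * L a y z w"
  "L x (r *\<^sub>R a) z w = r * L x a z w"
  "L x y (r *\<^sub>R a) w = r * L x y a w"
  "L x y z (r *\<^sub>R a) = r * L x y z a"
  using linear_scale[OF lin1] linear_scale[OF lin2] linear_scale[OF lin3] linear_scale[OF lin4] by auto

lemma Lneg:
  "L (- a) y z w = - L a y z w"
  "L x (- a) z w = - L x a z w"
  "L x y (- a) w = - L x y a w"
  "L x y z (- a) = - L x y z a"
  using linear_neg[OF lin1] linear_neg[OF lin2] linear_neg[OF lin3] linear_neg[OF lin4] by auto

lemma Lanti1: "L x y z w = - L y x z w" and Lanti2: "L x y z w = - L x y w z"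
  and Lbian: "L x y z w + L y z x w + L z x y w = 0"
  using cl unfolding curvature_like_def by blast+

lemma Lanti12: "L x y z w = L y x w z"
  using Lanti1[of x y z w] Lanti2[of y x z w] by simp

lemma Lpair: "L x y z w = L z w x y"
proof -
  have 1: "L x y z w + L y z x w + L z x y w = 0" by (rule Lbian)
  have 2: "L y z w x + L z w y x + L w y z x = 0" by (rule Lbian)
  have 3: "L z w x y + L w x z y + L x z w y = 0" by (rule Lbian)
  have 4: "L w x y z + L x y w z + L y w x z = 0" by (rule Lbian)
  have a: "L y z x w = L z y w x" "L z x y w = - L x z y w" "L y z w x = L z y x w"
    "L z w y x = L w z x y" "L w y z x = L y w x z" "L w x z y = L x w y z" "L x z w y = -L x z y w"
    "L w x y z = L x w z y" "L x y w z = - L x y z w" "L z y w x = - L y z w x"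
    "L z y x w = - L y z x w" "L w z x y = - L z w x y" "L x w y z = - L w x y z"
    "L x w z y = - L x w y z"
    by (rule Lanti12 Lanti1 Lanti2)+
  show ?thesis using 1 2 3 4 a by linarith
qed

lemma Lzero: "L x x z w = 0" "L x y z z = 0"
  using Lanti1[of x x z w] Lanti2[of x y z z] by auto

end

definition pp :: "('a::real_vector \<Rightarrow> 'a) \<Rightarrow> 'a \<Rightarrow> 'a" where
  "pp P x = (1/2) *\<^sub>R (x + P x)"
definition mm :: "('a::real_vector \<Rightarrow> 'a) \<Rightarrow> 'a \<Rightarrow> 'a" where
  "mm P x = (1/2) *\<^sub>R (x - P x)"

context
  fixes P :: "'a::euclidean_space \<Rightarrow> 'a"
  assumes aps: "almost_product_structure P"
begin

lemma Plin: "linear P" and PP[simp]: "P (P x) = x" and Pinner: "inner (P x) (P y) = inner x y"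
  using aps unfolding almost_product_structure_def by auto

lemma Padd[simp]: "P (x + y) = P x + P y" and Pscale[simp]: "P (r *\<^sub>R x) = r *\<^sub>R P x"
  and Pneg[simp]: "P (- x) = - P x" and Pdiff[simp]: "P (x - y) = P x - P y"
  using linear_add[OF Plin] linear_scale[OF Plin] linear_neg[OF Plin] linear_diff[OF Plin] by auto

lemma Psym: "inner (P x) y = inner x (P y)"
  using Pinner[of x "P y"] by simp

lemma P_pp[simp]: "P (pp P x) = pp P x" and P_mm[simp]: "P (mm P x) = - mm P x"
  unfolding pp_def mm_def by (auto simp: algebra_simps)

lemma pp_mm: "pp P x + mm P x = x"
proof -
  have "(x + P x) + (x - P x) = 2 *\<^sub>R x" by (simp add: scaleR_2)
  then have "(1/2) *\<^sub>R ((x + P x) + (x - P x)) = x" by simp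
  then show ?thesis unfolding pp_def mm_def by (simp only: scaleR_add_right)
qed

lemma pp_sym: "inner (pp P x) y = inner x (pp P y)" and mm_sym: "inner (mm P x) y = inner x (mm P y)"
  unfolding pp_def mm_def by (auto simp: inner_add_left inner_add_right inner_diff_left inner_diff_right Psym)

lemma pp_P[simp]: "pp P (P x) = pp P x" and mm_P[simp]: "mm P (P x) = - mm P x"
  unfolding pp_def mm_def by (auto simp: algebra_simps)

lemma half_half: "(1/2) *\<^sub>R a + (1/2) *\<^sub>R a = (a::'a)"
proof -
  have "(1/2) *\<^sub>R a + (1/2) *\<^sub>R a = (1/2 + 1/2) *\<^sub>R a" by (rule scaleR_add_left[symmetric])
  then show ?thesis by simp
qed

lemma pp_fix: "P a = a \<Longrightarrow> pp P a = a" and mm_fix: "P a = - a \<Longrightarrow> mm P a = a"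
  unfolding pp_def mm_def by (simp_all add: half_half)

lemma pp_pp[simp]: "pp P (pp P x) = pp P x" and mm_mm[simp]: "mm P (mm P x) = mm P x"
  using pp_fix[OF P_pp] mm_fix[OF P_mm] by auto

end

context
  fixes P :: "'a::euclidean_space \<Rightarrow> 'a" and L :: "'a tensor4"
  assumes aps: "almost_product_structure P" and rpt: "riemannian_P_tensor P L"
begin

lemma cl': "curvature_like L" using rpt unfolding riemannian_P_tensor_def by auto

lemma Pinv: "L x y (P z) (P w) = L x y z w" using rpt unfolding riemannian_P_tensor_def by auto

lemma cross4: assumes "P a = a" "P b = - b" shows "L x y a b = 0"
proof -
  have "L x y a b = L x y (P a) (P b)" by (rule Pinv[symmetric])
  also have "\<dots> = - L x y a b" using assms Lneg[OF cl'] by simp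
  finally show ?thesis by simp
qed

lemma cross4': assumes "P a = - a" "P b = b" shows "L x y a b = 0"
  using cross4[OF assms(2,1), of x y] Lanti2[OF cl', of x y a b] by simp

lemma cross12: assumes "P a = a" "P b = - b" shows "L a b z w = 0" "L b a z w = 0"
  using cross4[OF assms, of z w] Lpair[OF cl', of a b z w] Lanti1[OF cl', of b a z w] by auto

lemma crossB: assumes "P a = a" "P b = b" "P c = - c" "P d = - d"
  shows "L a b c d = 0" "L c d a b = 0"
proof -
  have "L a b c d + L b c a d + L c a b d = 0" by (rule Lbian[OF cl'])
  moreover have "L b c a d = 0" "L c a b d = 0" using cross12 assms by auto
  ultimately show "L a b c d = 0" by simp
  then show "L c d a b = 0" using Lpair[OF cl', of a b c d] by simp
qed

lemma decomp: "L x y z w = L (pp P x) (pp P y) (pp P z) (pp P w) + L (mm P x) (mm P y) (mm P z) (mm P w)"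
proof -
  have "L x y z w = L (pp P x + mm P x) (pp P y + mm P y) (pp P z + mm P z) (pp P w + mm P w)"
    by (simp add: pp_mm[OF aps])
  also have "\<dots> = L (pp P x) (pp P y) (pp P z) (pp P w) + L (mm P x) (mm P y) (mm P z) (mm P w)"
    using P_pp[OF aps] P_mm[OF aps]
    by (simp add: Ladd[OF cl'] cross4 cross4' cross12 crossB)
  finally show ?thesis .
qed

end

lemma onb_expand:
  fixes B :: "'a::euclidean_space set"
  assumes fin: "finite B" and orth: "pairwise orthogonal B" and nrm: "\<And>u. u \<in> B \<Longrightarrow> norm u = 1"
    and x: "x \<in> span B"
  shows "x = (\<Sum>u\<in>B. inner x u *\<^sub>R u)"
proof -
  define y where "y = x - (\<Sum>u\<in>B. inner x u *\<^sub>R u)"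
  have ysp: "y \<in> span B" unfolding y_def
    by (intro span_diff x span_sum span_scale span_base)
  have "orthogonal y v" if v: "v \<in> B" for v
  proof -
    have "(\<Sum>u\<in>B. inner x u * inner u v) = inner x v * inner v v + (\<Sum>u\<in>B-{v}. inner x u * inner u v)"
      using fin v by (simp add: sum.remove)
    also have "(\<Sum>u\<in>B-{v}. inner x u * inner u v) = 0"
      using orth v by (intro sum.neutral) (auto simp: pairwise_def orthogonal_def)
    also have "inner v v = 1" using nrm[OF v] by (simp add: power2_norm_eq_inner[symmetric])
    finally have "(\<Sum>u\<in>B. inner x u * inner u v) = inner x v" by simp
    then show ?thesis unfolding y_def orthogonal_def
      by (simp add: inner_diff_left inner_sum_left)
  qed
  then have "orthogonal y y" using ysp orthogonal_to_span by blast
  then have "y = 0" by (simp add: orthogonal_def)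
  then show ?thesis unfolding y_def by simp
qed

lemma proj_basis:
  fixes Q :: "'a::euclidean_space \<Rightarrow> 'a"
  assumes lin: "linear Q" and idem: "\<And>x. Q (Q x) = Q x" and sym: "\<And>x y. inner (Q x) y = inner x (Q y)"
    and tr: "(\<Sum>b\<in>Basis. inner b (Q b)) = 2"
  shows "\<exists>u1 u2. \<forall>x. Q x = inner x u1 *\<^sub>R u1 + inner x u2 *\<^sub>R u2"
proof -
  define S where "S = {x. Q x = x}"
  have sub: "subspace S" unfolding S_def subspace_def
    using linear_0[OF lin] linear_add[OF lin] linear_scale[OF lin] by auto
  obtain B where BS: "B \<subseteq> S" and orth: "pairwise orthogonal B"
    and nrm: "\<And>x. x \<in> B \<Longrightarrow> norm x = 1" and ind: "independent B" and spB: "span B = S"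
    using orthonormal_basis_subspace[OF sub] by metis
  have fin: "finite B" using ind independent_imp_finite by blast
  have exp: "Q x = (\<Sum>u\<in>B. inner x u *\<^sub>R u)" for x
  proof -
    have "Q x \<in> span B" using spB idem unfolding S_def by auto
    then have "Q x = (\<Sum>u\<in>B. inner (Q x) u *\<^sub>R u)" using onb_expand[OF fin orth] nrm by blast
    also have "\<dots> = (\<Sum>u\<in>B. inner x u *\<^sub>R u)"
    proof (rule sum.cong[OF refl])
      fix u assume "u \<in> B"
      then have "Q u = u" using BS unfolding S_def by auto
      then show "inner (Q x) u *\<^sub>R u = inner x u *\<^sub>R u" by (simp add: sym)
    qed
    finally show ?thesis .
  qed
  have "(\<Sum>b\<in>Basis. inner b (Q b)) = (\<Sum>b\<in>Basis. \<Sum>u\<in>B. inner b u * inner b u)"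
    by (simp add: exp inner_sum_right)
  also have "\<dots> = (\<Sum>u\<in>B. \<Sum>b\<in>Basis. inner u b * inner u b)"
    by (subst sum.swap) (simp add: inner_commute)
  also have "\<dots> = (\<Sum>u\<in>B. inner u u)"
    by (simp add: euclidean_inner[symmetric])
  also have "\<dots> = (\<Sum>u\<in>B. 1)"
    using nrm by (intro sum.cong refl) (simp add: power2_norm_eq_inner[symmetric])
  finally have "card B = 2" using tr by simp
  then obtain u1 u2 where "B = {u1, u2}" "u1 \<noteq> u2" by (auto simp: card_2_iff)
  then have "\<forall>x. Q x = inner x u1 *\<^sub>R u1 + inner x u2 *\<^sub>R u2" using exp by simp
  then show ?thesis by blast
qed


definition GA :: "('a::real_inner \<Rightarrow> 'a) \<Rightarrow> 'a tensor4" where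
  "GA Q x y z w = inner x (Q z) * inner y (Q w) - inner x (Q w) * inner y (Q z)"

lemma GA_sum:
  fixes Q :: "'a::euclidean_space \<Rightarrow> 'a"
  assumes idem: "\<And>x. Q (Q x) = Q x" and sym: "\<And>x y. inner (Q x) y = inner x (Q y)"
    and tr: "(\<Sum>b\<in>Basis. inner b (Q b)) = 2"
  shows "(\<Sum>f\<in>Basis. \<Sum>e\<in>Basis. GA Q e f f e) = -2"
proof -
  have 1: "(\<Sum>e\<in>Basis. inner e (Q f) * inner f (Q e)) = inner f (Q f)" for f
  proof -
    have "(\<Sum>e\<in>Basis. inner e (Q f) * inner f (Q e)) = (\<Sum>e\<in>Basis. inner (Q f) e * inner (Q f) e)"
      by (intro sum.cong refl) (metis sym inner_commute)
    also have "\<dots> = inner (Q f) (Q f)" by (simp add: euclidean_inner[symmetric])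
    also have "\<dots> = inner f (Q f)" by (simp add: sym idem)
    finally show ?thesis .
  qed
  have 2: "(\<Sum>e\<in>Basis. GA Q e f f e) = - inner f (Q f)" for f
    unfolding GA_def by (simp add: sum_subtractf 1 sum_distrib_right[symmetric] tr)
  show ?thesis by (simp add: 2 sum_negf tr)
qed

lemma GA_P:
  "GA Q x y z (P w) = GA Q x y z w" if "\<And>v. Q (P v) = Q v"
  using that unfolding GA_def by simp

lemma GA_Pm:
  "GA Q x y z (P w) = - GA Q x y z w" if "\<And>v. Q (P v) = - Q v"
  using that unfolding GA_def by simp

context
  fixes L :: "'a::euclidean_space tensor4"
  assumes cl: "curvature_like L"
begin

lemma twoD: "L (a *\<^sub>R u + b *\<^sub>R v) (c *\<^sub>R u + d *\<^sub>R v) (e *\<^sub>R u + f *\<^sub>R v) (g *\<^sub>R u + h *\<^sub>R v)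
   = (a*d - b*c) * (e*h - f*g) * L u v u v"
proof -
  have i: "L v u u v = - L u v u v" "L u v v u = - L u v u v" "L v u v u = L u v u v"
    using Lanti1[OF cl, of v u u v] Lanti2[OF cl, of u v v u] Lanti12[OF cl, of v u v u] by auto
  show ?thesis by (simp add: Ladd[OF cl] Lscale[OF cl] Lzero[OF cl] i algebra_simps)
qed

end

context
  fixes P :: "'a::euclidean_space \<Rightarrow> 'a"
  assumes aps: "almost_product_structure P" and dim: "DIM('a) = 4" and trP: "trace_op P = 0"
begin

lemma inner_pp: "inner x (pp P y) = (inner x y + inner x (P y)) / 2"
  and inner_mm: "inner x (mm P y) = (inner x y - inner x (P y)) / 2"
  unfolding pp_def mm_def by (simp_all add: inner_add_right inner_diff_right)

lemma sum_ee: "(\<Sum>b\<in>(Basis::'a set). inner b b) = 4"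
proof -
  have "(\<Sum>b\<in>(Basis::'a set). inner b b) = (\<Sum>b\<in>(Basis::'a set). 1)"
    by (intro sum.cong refl) (simp add: inner_Basis)
  then show ?thesis using dim by simp
qed

lemma sum_eP: "(\<Sum>b\<in>(Basis::'a set). inner b (P b)) = 0"
  using trP unfolding trace_op_def by (simp add: inner_commute)

lemma tr_pp: "(\<Sum>b\<in>Basis. inner b (pp P b)) = 2"
  by (simp add: inner_pp sum_divide_distrib[symmetric] sum.distrib sum_ee sum_eP dim)

lemma tr_mm: "(\<Sum>b\<in>Basis. inner b (mm P b)) = 2"
  by (simp add: inner_mm sum_divide_distrib[symmetric] sum_subtractf sum_ee sum_eP dim)

lemma lin_pp: "linear (pp P)" and lin_mm: "linear (mm P)"
  by (auto intro!: linearI simp: pp_def mm_def Padd[OF aps] Pscale[OF aps] algebra_simps)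

lemma rep:
  assumes rpt: "riemannian_P_tensor P L"
  shows "\<exists>a b. \<forall>x y z w. L x y z w = a * GA (pp P) x y z w + b * GA (mm P) x y z w"
proof -
  have cl: "curvature_like L" using rpt unfolding riemannian_P_tensor_def by auto
  obtain u1 u2 where U: "\<And>x. pp P x = inner x u1 *\<^sub>R u1 + inner x u2 *\<^sub>R u2"
    using proj_basis[OF lin_pp pp_pp[OF aps] pp_sym[OF aps] tr_pp] by blast
  obtain v1 v2 where V: "\<And>x. mm P x = inner x v1 *\<^sub>R v1 + inner x v2 *\<^sub>R v2"
    using proj_basis[OF lin_mm mm_mm[OF aps] mm_sym[OF aps] tr_mm] by blast
  have GU: "GA (pp P) x y z w = (inner x u1 * inner y u2 - inner x u2 * inner y u1) * (inner z u1 * inner w u2 - inner z u2 * inner w u1)" for x y z w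
    unfolding GA_def U by (simp add: inner_add_right algebra_simps)
  have GV: "GA (mm P) x y z w = (inner x v1 * inner y v2 - inner x v2 * inner y v1) * (inner z v1 * inner w v2 - inner z v2 * inner w v1)" for x y z w
    unfolding GA_def V by (simp add: inner_add_right algebra_simps)
  have "L x y z w = L u1 u2 u1 u2 * GA (pp P) x y z w + L v1 v2 v1 v2 * GA (mm P) x y z w" for x y z w
    by (subst decomp[OF aps rpt]) (simp add: U V twoD[OF cl] GU GV)
  then show ?thesis by blast
qed

end

theorem theorem3p2:
  fixes P :: "'a::euclidean_space \<Rightarrow> 'a" and L :: "'a tensor4"
  assumes "DIM('a) = 4"
    and "almost_product_structure P"
    and "trace_op P = 0"
    and "curvature_like L"
  shows "riemannian_P_tensor P L \<longleftrightarrow>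
    (\<forall>x y z w. L x y z w = (1/8) * (scal L * (pi1 x y z w + pi2 P x y z w)
                                   + scal_star P L * pi3 P x y z w))"
proof
  assume rpt: "riemannian_P_tensor P L"
  obtain a b where R: "\<And>x y z w. L x y z w = a * GA (pp P) x y z w + b * GA (mm P) x y z w"
    using rep[OF assms(2,1,3) rpt] by blast
  have sA: "(\<Sum>f\<in>Basis. \<Sum>e\<in>Basis. GA (pp P) e f f e) = -2"
    by (rule GA_sum[OF pp_pp[OF assms(2)] pp_sym[OF assms(2)] tr_pp[OF assms(2,1,3)]])
  have sB: "(\<Sum>f\<in>Basis. \<Sum>e\<in>Basis. GA (mm P) e f f e) = -2"
    by (rule GA_sum[OF mm_mm[OF assms(2)] mm_sym[OF assms(2)] tr_mm[OF assms(2,1,3)]])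
  have scal: "scal L = -2*a - 2*b"
    unfolding scal_def ricci_def R
    by (simp add: sum.distrib sum_distrib_left[symmetric] sA sB)
  have scals: "scal_star P L = -2*a + 2*b"
    unfolding scal_star_def ricci_star_def R
    by (simp add: GA_P[of "pp P" P] GA_Pm[of "mm P" P] pp_P[OF assms(2)] mm_P[OF assms(2)]
        sum.distrib sum_subtractf sum_distrib_left[symmetric] sum_negf sA sB)
  show "\<forall>x y z w. L x y z w = (1/8) * (scal L * (pi1 x y z w + pi2 P x y z w)
                                   + scal_star P L * pi3 P x y z w)"
    unfolding scal scals R
    by (simp add: GA_def inner_pp[OF assms(2,1,3)] inner_mm[OF assms(2,1,3)] pi1_def pi2_def pi3_def
        psi1_def psi2_def gtilde_def algebra_simps) (simp add: field_simps)
next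
  assume H: "\<forall>x y z w. L x y z w = (1/8) * (scal L * (pi1 x y z w + pi2 P x y z w)
                                   + scal_star P L * pi3 P x y z w)"
  have "L x y (P z) (P w) = L x y z w" for x y z w
    apply (subst (1 2) H[rule_format])
    by (simp add: PP[OF assms(2)] pi1_def pi2_def pi3_def psi1_def psi2_def gtilde_def algebra_simps)
  then show "riemannian_P_tensor P L"
    using assms(4) unfolding riemannian_P_tensor_def by blast
qed

end
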